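(* Let $Q$ be a finite set with $|Q|\ge2$, let $0\le r\le m$ be integers, let $G_m$ be the subgroup of $\mathcal D_m$ generated by some $r$ of the elements $g_0,\dots,g_{m-1}$, let $W=\{w\in Q^{\mathcal D_m}: w(g+\cdot)=w(\cdot)\ \forall g\in G_m\}$, and let $\nu$ be the uniform probability measure on $W$ (regarded as a measure on $Q^{\mathcal D_m}$). Then for every sufficiently small $\varepsilon>0$ there are constants $0<c\le C$ depending only on $\varepsilon$ and $|Q|$ such that $c\,2^{m-r}\le \mathbb H_\varepsilon(Q^{\mathcal D_m},\nu,\operatorname{dist}_m)\le C\,2^{m-r}$ whenever $m-r$ is large enough; i.e. $\mathbb H_\varepsilon(Q^{\mathcal D_m},\nu,\operatorname{dist}_m)\asymp 2^{m-r}$ as $m-r\to\infty$.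
   Context: $\mathcal D=\bigoplus_{i\ge0}\mathbb Z/2\mathbb Z$ with generators $g_0,g_1,\dots$; $\mathcal D_m=\langle g_0,\dots,g_{m-1}\rangle$ (of order $2^m$). $\mathcal T_m$ is the group of bijections $S$ of $\mathcal D_m$ that, for each $0<j<m$, map every coset of $\mathcal D_j$ in $\mathcal D_m$ onto a coset of $\mathcal D_j$ (this group is isomorphic to the automorphism group of the binary tree of height $m$); it acts on $Q^{\mathcal D_m}$ by $(Sw)(g)=w(S^{-1}g)$. $d_H(w_1,w_2)=2^{-m}|\{g\in\mathcal D_m:w_1(g)\ne w_2(g)\}|$ is the normalized Hamming metric, and $\operatorname{dist}_m(w_1,w_2)=\min_{S\in\mathcal T_m}d_H(w_1,Sw_2)$. For a semimetric probability space, $\mathbb H_\varepsilon$ is the binary logarithm of the least $k$ such that the space can be partitioned into sets $X_0,\dots,X_k$ with measure of $X_0$ less than $\varepsilon$ and each $X_j$, $j\ge1$, of diameter less than $\varepsilon$. *)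

theory Defs
  imports "HOL-Probability.Probability" "HOL-Library.FuncSet"
begin

text \<open>Representation: an element of the group D_m is a finite set of indices
  A \<subseteq> {..<m} (the element sum of g_i for i in A); the group operation is
  symmetric difference, g_i corresponds to {i}, D_j corresponds to Pow {..<j}.\<close>

definition Dm :: "nat \<Rightarrow> nat set set" where
  "Dm m = Pow {..<m}"

definition dadd :: "nat set \<Rightarrow> nat set \<Rightarrow> nat set" where
  "dadd a b = (a - b) \<union> (b - a)"

definition gen :: "nat \<Rightarrow> nat set" where
  "gen i = {i}"

inductive_set dgen :: "nat set set \<Rightarrow> nat set set" for S where
  zero: "{} \<in> dgen S"
| step: "x \<in> S \<Longrightarrow> a \<in> dgen S \<Longrightarrow> dadd x a \<in> dgen S"

definition cosets :: "nat \<Rightarrow> nat \<Rightarrow> nat set set set" where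
  "cosets m j = {(\<lambda>b. dadd a b) ` Dm j | a. a \<in> Dm m}"

definition Tm :: "nat \<Rightarrow> (nat set \<Rightarrow> nat set) set" where
  "Tm m = {S. bij_betw S (Dm m) (Dm m) \<and>
              (\<forall>j. 0 < j \<and> j < m \<longrightarrow> (\<forall>C \<in> cosets m j. S ` C \<in> cosets m j))}"

text \<open>The configuration space Q^{D_m} (extensional functions), for Q = UNIV :: 'q set.\<close>
definition words :: "nat \<Rightarrow> (nat set \<Rightarrow> 'q) set" where
  "words m = Dm m \<rightarrow>\<^sub>E (UNIV :: 'q set)"

definition act :: "nat \<Rightarrow> (nat set \<Rightarrow> nat set) \<Rightarrow> (nat set \<Rightarrow> 'q) \<Rightarrow> (nat set \<Rightarrow> 'q)" where
  "act m S w = (\<lambda>g. if g \<in> Dm m then w (inv_into (Dm m) S g) else undefined)"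

definition dH :: "nat \<Rightarrow> (nat set \<Rightarrow> 'q) \<Rightarrow> (nat set \<Rightarrow> 'q) \<Rightarrow> real" where
  "dH m w1 w2 = real (card {g \<in> Dm m. w1 g \<noteq> w2 g}) / 2 ^ m"

definition dist_m :: "nat \<Rightarrow> (nat set \<Rightarrow> 'q) \<Rightarrow> (nat set \<Rightarrow> 'q) \<Rightarrow> real" where
  "dist_m m w1 w2 = Min ((\<lambda>S. dH m w1 (act m S w2)) ` Tm m)"

definition Wper :: "nat \<Rightarrow> nat set set \<Rightarrow> (nat set \<Rightarrow> 'q) set" where
  "Wper m G = {w \<in> words m. \<forall>g \<in> G. \<forall>h \<in> Dm m. w (dadd g h) = w h}"

definition diam_d :: "('a \<Rightarrow> 'a \<Rightarrow> real) \<Rightarrow> 'a set \<Rightarrow> real" where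
  "diam_d d A = (if A = {} then 0 else (SUP p \<in> A \<times> A. d (fst p) (snd p)))"

definition H_eps :: "'a set \<Rightarrow> 'a pmf \<Rightarrow> ('a \<Rightarrow> 'a \<Rightarrow> real) \<Rightarrow> real \<Rightarrow> real" where
  "H_eps X mu d eps = log 2 (real (LEAST k. \<exists>P :: nat \<Rightarrow> 'a set.
      (\<Union>i\<le>k. P i) = X \<and>
      (\<forall>i\<le>k. \<forall>j\<le>k. i \<noteq> j \<longrightarrow> P i \<inter> P j = {}) \<and>
      measure_pmf.prob mu (P 0) < eps \<and>
      (\<forall>j\<in>{1..k}. diam_d d (P j) < eps)))"

end

theory Submission
  imports Defs
begin


definition close :: "nat \<Rightarrow> nat set \<Rightarrow> nat set \<Rightarrow> bool" where
  "close j x y \<longleftrightarrow> dadd x y \<subseteq> {..<j}"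

lemma dadd_comm: "dadd x y = dadd y x" unfolding dadd_def by auto
lemma dadd_self: "dadd x x = {}" unfolding dadd_def by auto
lemma dadd_inv: "dadd x (dadd x y) = y" unfolding dadd_def by auto
lemma dadd_eq0: "dadd x y = {} \<longleftrightarrow> x = y" unfolding dadd_def by auto
lemma dadd_tri: "dadd x z \<subseteq> dadd x y \<union> dadd y z" unfolding dadd_def by auto

lemma close_sym: "close j x y \<Longrightarrow> close j y x" unfolding close_def by (simp add: dadd_comm)
lemma close_trans: "close j x y \<Longrightarrow> close j y z \<Longrightarrow> close j x z"
  unfolding close_def using dadd_tri by blast
lemma close0: "close 0 x y \<longleftrightarrow> x = y" unfolding close_def using dadd_eq0 by auto
lemma close_big: "x \<subseteq> {..<m} \<Longrightarrow> y \<subseteq> {..<m} \<Longrightarrow> m \<le> j \<Longrightarrow> close j x y"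
  unfolding close_def dadd_def by auto

lemma coset_eq: assumes "a \<in> Dm m" "j \<le> m"
  shows "(\<lambda>b. dadd a b) ` Dm j = {y \<in> Dm m. close j a y}"
proof
  show "(\<lambda>b. dadd a b) ` Dm j \<subseteq> {y \<in> Dm m. close j a y}"
  proof
    fix y assume "y \<in> (\<lambda>b. dadd a b) ` Dm j"
    then obtain b where b: "b \<in> Dm j" "y = dadd a b" by auto
    have "y \<in> Dm m" using b assms unfolding Dm_def dadd_def by auto
    moreover have "close j a y" using b unfolding close_def Dm_def by (simp add: dadd_inv)
    ultimately show "y \<in> {y \<in> Dm m. close j a y}" by simp
  qed
  show "{y \<in> Dm m. close j a y} \<subseteq> (\<lambda>b. dadd a b) ` Dm j"
  proof
    fix y assume y: "y \<in> {y \<in> Dm m. close j a y}"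
    then have "dadd a y \<in> Dm j" unfolding close_def Dm_def by auto
    moreover have "y = dadd a (dadd a y)" by (simp add: dadd_inv)
    ultimately show "y \<in> (\<lambda>b. dadd a b) ` Dm j" by blast
  qed
qed

lemma Tm_close:
  assumes S: "S \<in> Tm m" and x: "x \<in> Dm m" and y: "y \<in> Dm m"
  shows "close j (S x) (S y) \<longleftrightarrow> close j x y"
proof -
  have bij: "bij_betw S (Dm m) (Dm m)" and cos: "\<And>j C. 0 < j \<Longrightarrow> j < m \<Longrightarrow> C \<in> cosets m j \<Longrightarrow> S ` C \<in> cosets m j"
    using S unfolding Tm_def by auto
  have Sx: "S x \<in> Dm m" and Sy: "S y \<in> Dm m" using bij x y by (auto simp: bij_betw_def)
  have inj: "inj_on S (Dm m)" using bij by (simp add: bij_betw_def)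
  consider "j = 0" | "m \<le> j" | "0 < j" "j < m" by linarith
  then show ?thesis
  proof cases
    case 1 then show ?thesis using inj x y by (auto simp: close0 inj_on_def)
  next
    case 2 then show ?thesis using Sx Sy x y close_big unfolding Dm_def by (metis PowD)
  next
    case 3
    define C where "C = (\<lambda>b. dadd x b) ` Dm j"
    have Cc: "C \<in> cosets m j" unfolding C_def cosets_def using x by auto
    have Ceq: "C = {z \<in> Dm m. close j x z}" unfolding C_def using coset_eq[OF x] 3 by simp
    obtain a where a: "a \<in> Dm m" "S ` C = (\<lambda>b. dadd a b) ` Dm j"
      using cos[OF 3 Cc] unfolding cosets_def by auto
    have SC: "S ` C = {z \<in> Dm m. close j a z}" using a coset_eq[OF a(1)] 3 by simp
    have xC: "x \<in> C" using Ceq x by (simp add: close_def dadd_self)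
    have aSx: "close j a (S x)" using xC SC by blast
    show ?thesis
    proof
      assume "close j (S x) (S y)"
      then have "close j a (S y)" using aSx close_trans by blast
      then have "S y \<in> S ` C" using SC Sy by blast
      then obtain y' where "y' \<in> C" "S y' = S y" by auto
      moreover have "y' \<in> Dm m" using \<open>y' \<in> C\<close> Ceq by auto
      ultimately have "y \<in> C" using inj y unfolding inj_on_def by metis
      then show "close j x y" using Ceq by auto
    next
      assume "close j x y"
      then have "y \<in> C" using Ceq y by auto
      then have "close j a (S y)" using SC by blast
      then show "close j (S x) (S y)" using aSx close_sym close_trans by blast
    qed
  qed
qed

lemma Tm_inv_close:
  assumes S: "S \<in> Tm m" and x: "x \<in> Dm m" and y: "y \<in> Dm m"
  shows "close j (inv_into (Dm m) S x) (inv_into (Dm m) S y) \<longleftrightarrow> close j x y"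
proof -
  have bij: "bij_betw S (Dm m) (Dm m)" using S unfolding Tm_def by auto
  let ?T = "inv_into (Dm m) S"
  have Tx: "?T x \<in> Dm m" "S (?T x) = x" using bij x
    by (auto simp: bij_betw_def inv_into_into f_inv_into_f)
  have Ty: "?T y \<in> Dm m" "S (?T y) = y" using bij y
    by (auto simp: bij_betw_def inv_into_into f_inv_into_f)
  show ?thesis using Tm_close[OF S Tx(1) Ty(1), of j] Tx Ty by simp
qed

lemma Tm_inv_into: assumes S: "S \<in> Tm m" and x: "x \<in> Dm m"
  shows "inv_into (Dm m) S x \<in> Dm m"
  using S x unfolding Tm_def by (auto simp: bij_betw_def inv_into_into)

lemma id_Tm: "id \<in> Tm m"
  unfolding Tm_def by (auto simp: bij_betw_def)

lemma dgen_subset: "a \<in> dgen (gen ` I) \<Longrightarrow> a \<subseteq> I"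
  by (induction rule: dgen.induct) (auto simp: gen_def dadd_def)

lemma dgen_finite: "finite A \<Longrightarrow> A \<subseteq> I \<Longrightarrow> A \<in> dgen (gen ` I)"
proof (induction A rule: finite_induct)
  case empty then show ?case by (simp add: dgen.zero)
next
  case (insert i A)
  then have "A \<in> dgen (gen ` I)" by auto
  moreover have "gen i \<in> gen ` I" using insert by auto
  ultimately have "dadd (gen i) A \<in> dgen (gen ` I)" by (blast intro: dgen.step)
  moreover have "dadd (gen i) A = insert i A" using insert unfolding gen_def dadd_def by auto
  ultimately show ?case by simp
qed


lemma words_ext: "w \<in> words m \<Longrightarrow> x \<notin> Dm m \<Longrightarrow> w x = undefined"
  unfolding words_def by (auto simp: PiE_def extensional_def)

lemma Wper_proj:
  assumes I: "I \<subseteq> {..<m}" and w: "w \<in> Wper m (dgen (gen ` I))" and x: "x \<in> Dm m"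
  shows "w x = w (x - I)"
proof -
  have g: "x \<inter> I \<in> dgen (gen ` I)"
    by (rule dgen_finite) (use I finite_subset in auto)
  have h: "x - I \<in> Dm m" using x unfolding Dm_def by auto
  have "dadd (x \<inter> I) (x - I) = x" unfolding dadd_def by auto
  then have "w (dadd (x \<inter> I) (x - I)) = w (x - I)" using w g h unfolding Wper_def by blast
  then show ?thesis using \<open>dadd (x \<inter> I) (x - I) = x\<close> by simp
qed

lemma Wper_bij:
  assumes I: "I \<subseteq> {..<m}"
  shows "bij_betw (\<lambda>w. restrict w (Pow ({..<m} - I))) (Wper m (dgen (gen ` I)) :: (nat set \<Rightarrow> 'q) set)
           (Pow ({..<m} - I) \<rightarrow>\<^sub>E (UNIV :: 'q set))"
proof -
  let ?J = "{..<m} - I"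
  let ?W = "Wper m (dgen (gen ` I)) :: (nat set \<Rightarrow> 'q) set"
  have inj: "inj_on (\<lambda>w. restrict w (Pow ?J)) ?W"
  proof (rule inj_onI)
    fix w1 w2 assume w1: "w1 \<in> ?W" and w2: "w2 \<in> ?W" and eq: "restrict w1 (Pow ?J) = restrict w2 (Pow ?J)"
    show "w1 = w2"
    proof
      fix x show "w1 x = w2 x"
      proof (cases "x \<in> Dm m")
        case True
        have xJ: "x - I \<in> Pow ?J" using True unfolding Dm_def by auto
        have "w1 (x - I) = w2 (x - I)" using fun_cong[OF eq, of "x - I"] xJ by simp
        then show ?thesis using Wper_proj[OF I w1 True] Wper_proj[OF I w2 True] by simp
      next
        case False
        have "w1 \<in> words m" "w2 \<in> words m" using w1 w2 unfolding Wper_def by auto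
        then show ?thesis using False words_ext[of w1 m x] words_ext[of w2 m x] by simp
      qed
    qed
  qed
  have surj: "(\<lambda>w. restrict w (Pow ?J)) ` ?W = Pow ?J \<rightarrow>\<^sub>E UNIV"
  proof
    show "(\<lambda>w. restrict w (Pow ?J)) ` ?W \<subseteq> Pow ?J \<rightarrow>\<^sub>E UNIV" by (intro image_subsetI restrict_PiE) simp
    show "Pow ?J \<rightarrow>\<^sub>E UNIV \<subseteq> (\<lambda>w. restrict w (Pow ?J)) ` ?W"
    proof
      fix v :: "nat set \<Rightarrow> 'q" assume v: "v \<in> Pow ?J \<rightarrow>\<^sub>E UNIV"
      define w where "w = restrict (\<lambda>x. v (x - I)) (Dm m)"
      have "w \<in> words m" unfolding w_def words_def by auto
      moreover have "\<forall>g \<in> dgen (gen ` I). \<forall>h \<in> Dm m. w (dadd g h) = w h"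
      proof (intro ballI)
        fix g h assume g: "g \<in> dgen (gen ` I)" and h: "h \<in> Dm m"
        have gI: "g \<subseteq> I" using dgen_subset[OF g] .
        have "dadd g h \<in> Dm m" using gI I h unfolding Dm_def dadd_def by auto
        moreover have "dadd g h - I = h - I" using gI unfolding dadd_def by auto
        ultimately show "w (dadd g h) = w h" unfolding w_def using h by simp
      qed
      ultimately have wW: "w \<in> ?W" unfolding Wper_def by simp
      have "restrict w (Pow ?J) = v"
      proof
        fix a show "restrict w (Pow ?J) a = v a"
        proof (cases "a \<in> Pow ?J")
          case True
          then have "a \<in> Dm m" "a - I = a" unfolding Dm_def by auto
          then show ?thesis using True unfolding w_def by simp
        next
          case False then show ?thesis using v by (auto simp: PiE_def extensional_def)
        qed
      qed
      then show "v \<in> (\<lambda>w. restrict w (Pow ?J)) ` ?W" using wW by blast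
    qed
  qed
  show ?thesis using inj surj by (simp add: bij_betw_def)
qed

lemma card_Wper:
  assumes I: "I \<subseteq> {..<m}"
  shows "card (Wper m (dgen (gen ` I)) :: (nat set \<Rightarrow> 'q::finite) set) = CARD('q) ^ (2 ^ (m - card I))"
proof -
  have fin: "finite I" using I finite_subset by auto
  have cJ: "card ({..<m} - I) = m - card I" using I fin by (simp add: card_Diff_subset)
  have "card (Wper m (dgen (gen ` I)) :: (nat set \<Rightarrow> 'q) set) = card (Pow ({..<m} - I) \<rightarrow>\<^sub>E (UNIV :: 'q set))"
    using bij_betw_same_card[OF Wper_bij[OF I]] .
  also have "\<dots> = CARD('q) ^ (2 ^ (m - card I))"
    by (simp add: card_funcsetE card_Pow cJ)
  finally show ?thesis .
qed

lemma finite_words: "finite (words m :: (nat set \<Rightarrow> 'q::finite) set)"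
  unfolding words_def Dm_def by (simp add: finite_PiE)

lemma Wper_words: "Wper m G \<subseteq> words m" unfolding Wper_def by auto

lemma Wper_nonempty: "(Wper m G :: (nat set \<Rightarrow> 'q) set) \<noteq> {}"
proof -
  have "(\<lambda>_. undefined) \<in> (Wper m G :: (nat set \<Rightarrow> 'q) set)"
    unfolding Wper_def words_def by (simp add: PiE_def extensional_def)
  then show ?thesis by blast
qed


definition tiso :: "nat set \<Rightarrow> (nat set \<Rightarrow> nat set) \<Rightarrow> bool" where
  "tiso J \<phi> \<longleftrightarrow> \<phi> ` Pow J \<subseteq> Pow J \<and>
     (\<forall>a\<in>Pow J. \<forall>b\<in>Pow J. \<forall>j. close j (\<phi> a) (\<phi> b) \<longleftrightarrow> close j a b)"

lemma iso_inj: "tiso J \<phi> \<Longrightarrow> inj_on \<phi> (Pow J)"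
  unfolding tiso_def inj_on_def using close0 by metis

lemma iso_bij: "finite J \<Longrightarrow> tiso J \<phi> \<Longrightarrow> bij_betw \<phi> (Pow J) (Pow J)"
  using iso_inj endo_inj_surj[of "Pow J" \<phi>] unfolding tiso_def bij_betw_def by auto

lemma iso_inv:
  assumes "finite J" "tiso J \<phi>"
  shows "tiso J (inv_into (Pow J) \<phi>)" "\<And>a. a \<in> Pow J \<Longrightarrow> \<phi> (inv_into (Pow J) \<phi> a) = a"
    "\<And>a. a \<in> Pow J \<Longrightarrow> inv_into (Pow J) \<phi> a \<in> Pow J"
proof -
  have bij: "bij_betw \<phi> (Pow J) (Pow J)" using iso_bij assms by auto
  show f: "\<And>a. a \<in> Pow J \<Longrightarrow> \<phi> (inv_into (Pow J) \<phi> a) = a"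
    using bij by (simp add: bij_betw_def f_inv_into_f)
  show i: "\<And>a. a \<in> Pow J \<Longrightarrow> inv_into (Pow J) \<phi> a \<in> Pow J"
    using bij by (metis bij_betw_def inv_into_into)
  have cl: "\<forall>a\<in>Pow J. \<forall>b\<in>Pow J. \<forall>j. close j (\<phi> a) (\<phi> b) \<longleftrightarrow> close j a b"
    using assms(2) unfolding tiso_def by auto
  show "tiso J (inv_into (Pow J) \<phi>)"
    unfolding tiso_def
  proof (intro conjI ballI allI)
    show "inv_into (Pow J) \<phi> ` Pow J \<subseteq> Pow J" using i by blast
    fix a b j assume a: "a \<in> Pow J" and b: "b \<in> Pow J"
    show "close j (inv_into (Pow J) \<phi> a) (inv_into (Pow J) \<phi> b) = close j a b"
      using cl i[OF a] i[OF b] f[OF a] f[OF b] by metis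
  qed
qed

lemma reduction:
  assumes I: "I \<subseteq> {..<m}" and J: "J = {..<m} - I"
    and w: "w \<in> Wper m (dgen (gen ` I))" and w': "w' \<in> Wper m (dgen (gen ` I))"
    and S: "S \<in> Tm m" and d: "dH m w (act m S w') < eps"
  shows "\<exists>\<phi>. tiso J \<phi> \<and> real (card {a \<in> Pow J. w a \<noteq> w' (\<phi> a)}) < eps * 2 ^ card J"
proof -
  define T where "T = inv_into (Dm m) S"
  have finI: "finite I" using I finite_subset by auto
  have finJ: "finite J" using J by auto
  have "card I \<le> m" using card_mono[OF _ I] by simp
  then have cardIJ: "card I + card J = m" using J I finI by (simp add: card_Diff_subset)
  define E where "E = {x \<in> Dm m. w x \<noteq> w' (T x)}"
  have "{g \<in> Dm m. w g \<noteq> act m S w' g} = E" unfolding E_def act_def T_def by auto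
  then have cE: "real (card E) < eps * 2 ^ m" using d unfolding dH_def by (simp add: divide_less_eq)
  define Et where "Et = (\<lambda>t. {a \<in> Pow J. w (a \<union> t) \<noteq> w' (T (a \<union> t))})"
  have "\<exists>t \<in> Pow I. real (card (Et t)) < eps * 2 ^ card J"
  proof (rule ccontr)
    assume "\<not> ?thesis"
    then have ge: "\<And>t. t \<in> Pow I \<Longrightarrow> eps * 2 ^ card J \<le> real (card (Et t))"
      using leI by blast
    have inj: "inj_on (\<lambda>(t, a). a \<union> t) (SIGMA t:Pow I. Et t)"
    proof (rule inj_onI)
      fix x y assume x: "x \<in> (SIGMA t:Pow I. Et t)" and y: "y \<in> (SIGMA t:Pow I. Et t)"
        and e: "(\<lambda>(t, a). a \<union> t) x = (\<lambda>(t, a). a \<union> t) y"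
      obtain t a where xa: "x = (t, a)" by force
      obtain t' a' where ya: "y = (t', a')" by force
      have h: "t \<subseteq> I" "t' \<subseteq> I" "a \<subseteq> J" "a' \<subseteq> J" "a \<union> t = a' \<union> t'"
        using x y e unfolding xa ya Et_def by auto
      then have "t = t'" "a = a'" using J by blast+
      then show "x = y" using xa ya by simp
    qed
    have sub: "(\<lambda>(t, a). a \<union> t) ` (SIGMA t:Pow I. Et t) \<subseteq> E"
    proof (rule image_subsetI)
      fix x assume x: "x \<in> (SIGMA t:Pow I. Et t)"
      obtain t a where xa: "x = (t, a)" by force
      have t: "t \<in> Pow I" and a: "a \<in> Et t" using x xa by auto
      have "a \<union> t \<in> Dm m" using t a I J unfolding Et_def Dm_def by auto
      then show "(\<lambda>(t, a). a \<union> t) x \<in> E" using a xa unfolding Et_def E_def by auto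
    qed
    have finE: "finite E" unfolding E_def Dm_def by auto
    have finEt: "\<And>t. finite (Et t)" unfolding Et_def using finJ by auto
    have "card (SIGMA t:Pow I. Et t) \<le> card E"
      using card_mono[OF finE sub] card_image[OF inj] by simp
    moreover have "card (SIGMA t:Pow I. Et t) = (\<Sum>t\<in>Pow I. card (Et t))"
      using finI finEt by (simp add: card_SigmaI)
    ultimately have "(\<Sum>t\<in>Pow I. real (card (Et t))) \<le> real (card E)"
      by (metis of_nat_le_iff of_nat_sum)
    moreover have "(\<Sum>t\<in>Pow I. eps * 2 ^ card J) \<le> (\<Sum>t\<in>Pow I. real (card (Et t)))"
      by (rule sum_mono) (use ge in auto)
    moreover have "(\<Sum>t\<in>Pow I. eps * 2 ^ card J) = eps * 2 ^ m"
    proof -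
      have "(\<Sum>t\<in>Pow I. eps * 2 ^ card J) = 2 ^ card I * (eps * 2 ^ card J)"
        using finI by (simp add: card_Pow)
      also have "\<dots> = eps * (2 ^ card I * 2 ^ card J)" by simp
      also have "2 ^ card I * 2 ^ card J = (2::real) ^ m" using cardIJ by (metis power_add)
      finally show ?thesis .
    qed
    ultimately show False using cE by linarith
  qed
  then obtain t where t: "t \<subseteq> I" and ct: "real (card (Et t)) < eps * 2 ^ card J" by auto
  define \<phi> where "\<phi> = (\<lambda>a. T (a \<union> t) - I)"
  have aDm: "\<And>a. a \<in> Pow J \<Longrightarrow> a \<union> t \<in> Dm m" using t I J unfolding Dm_def by auto
  have TDm: "\<And>a. a \<in> Pow J \<Longrightarrow> T (a \<union> t) \<in> Dm m" using Tm_inv_into[OF S] aDm unfolding T_def by auto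
  have "Et t = {a \<in> Pow J. w a \<noteq> w' (\<phi> a)}"
  proof -
    have "\<And>a. a \<in> Pow J \<Longrightarrow> w (a \<union> t) = w a"
    proof -
      fix a assume a: "a \<in> Pow J"
      have "(a \<union> t) - I = a" using a t J by auto
      then show "w (a \<union> t) = w a" using Wper_proj[OF I w aDm[OF a]] by simp
    qed
    moreover have "\<And>a. a \<in> Pow J \<Longrightarrow> w' (T (a \<union> t)) = w' (\<phi> a)"
      using Wper_proj[OF I w' TDm] unfolding \<phi>_def by auto
    ultimately show ?thesis unfolding Et_def by auto
  qed
  moreover have "tiso J \<phi>"
    unfolding tiso_def
  proof (intro conjI ballI allI)
    show "\<phi> ` Pow J \<subseteq> Pow J" using TDm J unfolding \<phi>_def Dm_def by auto
    fix a b j assume a: "a \<in> Pow J" and b: "b \<in> Pow J"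
    have dab: "dadd (a \<union> t) (b \<union> t) = dadd a b" using a b t J unfolding dadd_def by auto
    have cl: "\<And>k. close k (T (a \<union> t)) (T (b \<union> t)) \<longleftrightarrow> close k a b"
      using Tm_inv_close[OF S aDm[OF a] aDm[OF b]] dab unfolding T_def close_def by simp
    have dphi: "dadd (\<phi> a) (\<phi> b) = dadd (T (a \<union> t)) (T (b \<union> t)) - I" unfolding \<phi>_def dadd_def by auto
    show "close j (\<phi> a) (\<phi> b) \<longleftrightarrow> close j a b"
    proof
      assume "close j a b"
      then show "close j (\<phi> a) (\<phi> b)" using cl[of j] dphi unfolding close_def by auto
    next
      assume h: "close j (\<phi> a) (\<phi> b)"
      show "close j a b"
      proof (cases "a = b")
        case True then show ?thesis by (simp add: close_def dadd_self)
      next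
        case False
        define D where "D = dadd (T (a \<union> t)) (T (b \<union> t))"
        have ne: "dadd a b \<noteq> {}" using False dadd_eq0 by auto
        have fin: "finite (dadd a b)" using a b finJ unfolding dadd_def by (auto intro: finite_subset)
        define L where "L = Max (dadd a b)"
        have L: "L \<in> dadd a b" using Max_in[OF fin ne] unfolding L_def .
        have LJ: "L \<notin> I" using L a b J unfolding dadd_def by auto
        have "close (Suc L) a b" unfolding close_def L_def using Max_ge[OF fin] by (auto simp: less_Suc_eq_le)
        then have D1: "D \<subseteq> {..<Suc L}" using cl unfolding close_def D_def by blast
        have "\<not> close L a b" using L unfolding close_def by auto
        then have "\<not> D \<subseteq> {..<L}" using cl unfolding close_def D_def by blast
        then have "L \<in> D" using D1 by (metis lessThan_iff less_SucE subsetI subset_eq)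
        then have "L < j" using h dphi LJ unfolding close_def D_def by auto
        then have "D \<subseteq> {..<j}" using D1 by auto
        then show ?thesis using cl unfolding close_def D_def by blast
      qed
    qed
  qed
  ultimately show ?thesis using ct by auto
qed


definition Orb :: "nat set \<Rightarrow> (nat set \<Rightarrow> 'q) \<Rightarrow> (nat set \<Rightarrow> 'q) set" where
  "Orb J u = {restrict (\<lambda>a. u (\<phi> a)) (Pow J) | \<phi>. tiso J \<phi>}"

lemma Orb_sub: "Orb J u \<subseteq> Pow J \<rightarrow>\<^sub>E UNIV"
  unfolding Orb_def by (force intro: restrict_PiE)

lemma Orb_finite: "finite J \<Longrightarrow> finite (Orb J (u :: nat set \<Rightarrow> 'q::finite))"
  using Orb_sub finite_subset by (metis finite_Pow_iff finite_PiE finite)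

lemma Orb_empty: "card (Orb {} u) \<le> 1"
proof -
  have sub: "Orb {} u \<subseteq> {restrict (\<lambda>a. u {}) (Pow {})}"
  proof
    fix v assume "v \<in> Orb {} u"
    then obtain \<phi> where v: "v = restrict (\<lambda>a. u (\<phi> a)) (Pow {})" and i: "tiso {} \<phi>"
      unfolding Orb_def by auto
    have "\<phi> {} = {}" using i unfolding tiso_def by auto
    then show "v \<in> {restrict (\<lambda>a. u {}) (Pow {})}" using v by auto
  qed
  show ?thesis using card_mono[OF _ sub] by simp
qed

definition lo :: "nat set \<Rightarrow> (nat set \<Rightarrow> 'q) \<Rightarrow> (nat set \<Rightarrow> 'q)" where
  "lo J u = restrict u (Pow (J - {Max J}))"
definition hi :: "nat set \<Rightarrow> (nat set \<Rightarrow> 'q) \<Rightarrow> (nat set \<Rightarrow> 'q)" where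
  "hi J u = restrict (\<lambda>a. u (insert (Max J) a)) (Pow (J - {Max J}))"

lemma split_inj:
  assumes "finite J" "J \<noteq> {}"
  shows "inj_on (\<lambda>v. (lo J v, hi J v)) (Pow J \<rightarrow>\<^sub>E UNIV)"
proof (rule inj_onI)
  fix v1 v2 :: "nat set \<Rightarrow> 'a" assume v1: "v1 \<in> Pow J \<rightarrow>\<^sub>E UNIV" and v2: "v2 \<in> Pow J \<rightarrow>\<^sub>E UNIV"
    and e: "(lo J v1, hi J v1) = (lo J v2, hi J v2)"
  let ?j = "Max J"
  have jJ: "?j \<in> J" using assms by simp
  show "v1 = v2"
  proof
    fix a show "v1 a = v2 a"
    proof (cases "a \<in> Pow J")
      case False then show ?thesis using PiE_arb[OF v1 False] PiE_arb[OF v2 False] by metis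
    next
      case True
      show ?thesis
      proof (cases "?j \<in> a")
        case False
        then have "a \<in> Pow (J - {?j})" using True by auto
        then show ?thesis using fun_cong[OF arg_cong[OF e, of fst], of a] unfolding lo_def by simp
      next
        case jin: True
        then have "a - {?j} \<in> Pow (J - {?j})" using True by auto
        moreover have "insert ?j (a - {?j}) = a" using jin by auto
        ultimately show ?thesis using fun_cong[OF arg_cong[OF e, of snd], of "a - {?j}"] unfolding hi_def by simp
      qed
    qed
  qed
qed

lemma close_top:
  assumes "finite J" "x \<in> Pow J" "y \<in> Pow J"
  shows "close (Max J) x y \<longleftrightarrow> (Max J \<in> x \<longleftrightarrow> Max J \<in> y)"
proof -
  have "\<And>z. z \<in> dadd x y \<Longrightarrow> z \<le> Max J" using assms unfolding dadd_def by auto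
  then have "dadd x y \<subseteq> {..<Max J} \<longleftrightarrow> Max J \<notin> dadd x y" by (auto simp: order.order_iff_strict)
  then show ?thesis unfolding close_def dadd_def by auto
qed

lemma orb_split:
  assumes fin: "finite J" and ne: "J \<noteq> {}" and v: "v \<in> Orb J u"
  shows "(lo J v, hi J v) \<in> (Orb (J - {Max J}) (lo J u) \<times> Orb (J - {Max J}) (hi J u))
           \<union> (Orb (J - {Max J}) (hi J u) \<times> Orb (J - {Max J}) (lo J u))"
proof -
  let ?j = "Max J"
  let ?J' = "J - {Max J}"
  have jJ: "?j \<in> J" using fin ne by simp
  obtain \<phi> where vd: "v = restrict (\<lambda>a. u (\<phi> a)) (Pow J)" and i: "tiso J \<phi>"
    using v unfolding Orb_def by auto
  have into: "\<And>a. a \<in> Pow J \<Longrightarrow> \<phi> a \<in> Pow J" using i unfolding tiso_def by auto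
  have cl: "\<And>a b k. a \<in> Pow J \<Longrightarrow> b \<in> Pow J \<Longrightarrow> close k (\<phi> a) (\<phi> b) \<longleftrightarrow> close k a b"
    using i unfolding tiso_def by auto
  define s where "s = (?j \<in> \<phi> {})"
  have mem: "\<And>a. a \<in> Pow J \<Longrightarrow> (?j \<in> \<phi> a) \<longleftrightarrow> (s \<noteq> (?j \<in> a))"
  proof -
    fix a assume a: "a \<in> Pow J"
    have "close ?j (\<phi> a) (\<phi> {}) \<longleftrightarrow> close ?j a {}" using cl[OF a] by simp
    then show "(?j \<in> \<phi> a) \<longleftrightarrow> (s \<noteq> (?j \<in> a))"
      using close_top[OF fin into[OF a] into[of "{}"]] close_top[OF fin a, of "{}"] unfolding s_def by auto
  qed
  define g where "g = (\<lambda>b a. if b then insert ?j a else (a::nat set))"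
  define \<psi> where "\<psi> = (\<lambda>b a. \<phi> (g b a) - {?j})"
  have gJ: "\<And>b a. a \<in> Pow ?J' \<Longrightarrow> g b a \<in> Pow J" unfolding g_def using jJ by auto
  have gmem: "\<And>b a. a \<in> Pow ?J' \<Longrightarrow> (?j \<in> g b a) = b" unfolding g_def by auto
  have iso_psi: "\<And>b. tiso ?J' (\<psi> b)"
    unfolding tiso_def
  proof (intro allI conjI ballI)
    fix b
    show "\<psi> b ` Pow ?J' \<subseteq> Pow ?J'" unfolding \<psi>_def using into gJ by blast
    fix a a' k assume a: "a \<in> Pow ?J'" and a': "a' \<in> Pow ?J'"
    have m1: "(?j \<in> \<phi> (g b a)) = (?j \<in> \<phi> (g b a'))" using mem[OF gJ[OF a]] mem[OF gJ[OF a']] gmem[OF a] gmem[OF a'] by simp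
    have "dadd (\<psi> b a) (\<psi> b a') = dadd (\<phi> (g b a)) (\<phi> (g b a'))"
      using m1 unfolding \<psi>_def dadd_def by auto
    moreover have "dadd (g b a) (g b a') = dadd a a'" using a a' unfolding g_def dadd_def by auto
    ultimately show "close k (\<psi> b a) (\<psi> b a') = close k a a'"
      using cl[OF gJ[OF a] gJ[OF a']] unfolding close_def by simp
  qed
  have val: "\<And>b a. a \<in> Pow ?J' \<Longrightarrow> u (\<phi> (g b a)) = (if s \<noteq> b then hi J u (\<psi> b a) else lo J u (\<psi> b a))"
  proof -
    fix b a assume a: "a \<in> Pow ?J'"
    have pJ: "\<psi> b a \<in> Pow ?J'" unfolding \<psi>_def using into[OF gJ[OF a]] by auto
    have m: "(?j \<in> \<phi> (g b a)) = (s \<noteq> b)" using mem[OF gJ[OF a]] gmem[OF a] by simp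
    show "u (\<phi> (g b a)) = (if s \<noteq> b then hi J u (\<psi> b a) else lo J u (\<psi> b a))"
    proof (cases "s \<noteq> b")
      case True
      then have "\<phi> (g b a) = insert ?j (\<psi> b a)" using m unfolding \<psi>_def by auto
      then show ?thesis using True pJ unfolding hi_def by simp
    next
      case False
      then have "\<phi> (g b a) = \<psi> b a" using m unfolding \<psi>_def by auto
      then show ?thesis using False pJ unfolding lo_def by simp
    qed
  qed
  have lov: "lo J v = restrict (\<lambda>a. (if s then hi J u else lo J u) (\<psi> False a)) (Pow ?J')"
  proof
    fix a show "lo J v a = restrict (\<lambda>a. (if s then hi J u else lo J u) (\<psi> False a)) (Pow ?J') a"
      using val[of a False] gJ[of a False] unfolding lo_def vd by (simp add: g_def)
  qed
  have hiv: "hi J v = restrict (\<lambda>a. (if s then lo J u else hi J u) (\<psi> True a)) (Pow ?J')"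
  proof
    fix a show "hi J v a = restrict (\<lambda>a. (if s then lo J u else hi J u) (\<psi> True a)) (Pow ?J') a"
      using val[of a True] gJ[of a True] unfolding hi_def vd by (simp add: g_def)
  qed
  have o1: "lo J v \<in> Orb ?J' (if s then hi J u else lo J u)" unfolding Orb_def lov using iso_psi by blast
  have o2: "hi J v \<in> Orb ?J' (if s then lo J u else hi J u)" unfolding Orb_def hiv using iso_psi by blast
  show ?thesis using o1 o2 by (cases s) auto
qed

lemma orb_card_split:
  assumes fin: "finite J" and ne: "J \<noteq> {}"
    and X0: "Orb (J - {Max J}) (lo J u) \<subseteq> X0" and X1: "Orb (J - {Max J}) (hi J u) \<subseteq> X1"
    and f0: "finite X0" and f1: "finite X1"
  shows "card (Orb J (u :: nat set \<Rightarrow> 'q)) \<le> card (X0 \<times> X1 \<union> X1 \<times> X0)"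
proof -
  have inj: "inj_on (\<lambda>v. (lo J v, hi J v)) (Orb J u)"
    by (rule inj_on_subset[OF split_inj[OF fin ne] Orb_sub])
  have sub: "(\<lambda>v. (lo J v, hi J v)) ` Orb J u \<subseteq> X0 \<times> X1 \<union> X1 \<times> X0"
  proof (rule image_subsetI)
    fix v assume "v \<in> Orb J u"
    from orb_split[OF fin ne this] X0 X1 show "(lo J v, hi J v) \<in> X0 \<times> X1 \<union> X1 \<times> X0" by blast
  qed
  have fU: "finite (X0 \<times> X1 \<union> X1 \<times> X0)" using f0 f1 by simp
  have "card (Orb J u) = card ((\<lambda>v. (lo J v, hi J v)) ` Orb J u)" using card_image[OF inj] by simp
  also have "\<dots> \<le> card (X0 \<times> X1 \<union> X1 \<times> X0)" by (rule card_mono[OF fU sub])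
  finally show ?thesis .
qed

lemma card_sq: "finite X0 \<Longrightarrow> finite X1 \<Longrightarrow> card (X0 \<times> X1 \<union> X1 \<times> X0) \<le> 2 * card X0 * card X1"
proof -
  assume f: "finite X0" "finite X1"
  have "card (X0 \<times> X1 \<union> X1 \<times> X0) \<le> card (X0 \<times> X1) + card (X1 \<times> X0)" by (rule card_Un_le)
  moreover have "card X1 * card X0 = card X0 * card X1" by simp
  ultimately show ?thesis by (simp add: card_cartesian_product)
qed

lemma orb_rec:
  assumes fin: "finite J" and ne: "J \<noteq> {}"
  shows "card (Orb J (u :: nat set \<Rightarrow> 'q::finite)) \<le>
     2 * card (Orb (J - {Max J}) (lo J u)) * card (Orb (J - {Max J}) (hi J u))"
  using orb_card_split[OF fin ne order.refl order.refl] card_sq Orb_finite fin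
  by (meson finite_Diff le_trans)

lemma orb_gen:
  "finite J \<Longrightarrow> 2 * card (Orb J (u :: nat set \<Rightarrow> 'q::finite)) \<le> 2 ^ (2 ^ card J)"
proof (induction "card J" arbitrary: J u)
  case 0
  then have "J = {}" by simp
  then show ?case using Orb_empty[of u] by simp
next
  case (Suc n)
  then have ne: "J \<noteq> {}" by auto
  have c: "card (J - {Max J}) = n" using Suc ne by simp
  have f: "finite (J - {Max J})" using Suc by simp
  have "2 * card (Orb J u) \<le> (2 * card (Orb (J - {Max J}) (lo J u))) * (2 * card (Orb (J - {Max J}) (hi J u)))"
    using orb_rec[OF Suc(3) ne, of u] by (simp add: algebra_simps)
  also have "\<dots> \<le> 2 ^ (2 ^ n) * 2 ^ (2 ^ n)"
  proof -
    have a: "2 * card (Orb (J - {Max J}) (lo J u)) \<le> 2 ^ (2 ^ n)" using Suc(1)[OF c[symmetric] f] c by simp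
    have b: "2 * card (Orb (J - {Max J}) (hi J u)) \<le> 2 ^ (2 ^ n)" using Suc(1)[OF c[symmetric] f] c by simp
    show ?thesis using mult_le_mono[OF a b] .
  qed
  also have "\<dots> = 2 ^ (2 ^ Suc n)" by (simp flip: power_add)
  finally show ?case using Suc(2) by simp
qed


lemma two_elem:
  assumes "CARD('q::finite) = 2" "(x::'q) \<noteq> z" "y \<noteq> z"
  shows "x = y"
proof -
  obtain p p' :: 'q where U: "UNIV = {p, p'}" "p \<noteq> p'"
    using assms(1) card_2_iff by metis
  have "x \<in> {p, p'}" "y \<in> {p, p'}" "z \<in> {p, p'}" using U by auto
  then show ?thesis using assms by auto
qed

definition Xset :: "nat \<Rightarrow> (nat set \<Rightarrow> 'q) \<Rightarrow> (nat set \<Rightarrow> 'q) set" where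
  "Xset i x = (if x {} = x {i} then {restrict (\<lambda>a. x {}) (Pow {i})}
      else {f \<in> Pow {i} \<rightarrow>\<^sub>E UNIV. f {} \<noteq> f {i}})"

lemma Pow_single: "a \<in> Pow {i} \<longleftrightarrow> a = {} \<or> a = {i}" by auto

lemma Orb_Xset: "Orb {i} x \<subseteq> Xset i x"
proof
  fix v assume "v \<in> Orb {i} x"
  then obtain \<phi> where v: "v = restrict (\<lambda>a. x (\<phi> a)) (Pow {i})" and t: "tiso {i} \<phi>"
    unfolding Orb_def by auto
  have into: "\<phi> {} \<in> Pow {i}" "\<phi> {i} \<in> Pow {i}" using t unfolding tiso_def by auto
  have neq: "\<phi> {} \<noteq> \<phi> {i}" using iso_inj[OF t] unfolding inj_on_def by auto
  show "v \<in> Xset i x"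
  proof (cases "x {} = x {i}")
    case True
    have "v = restrict (\<lambda>a. x {}) (Pow {i})"
    proof
      fix a show "v a = restrict (\<lambda>a. x {}) (Pow {i}) a"
      proof (cases "a \<in> Pow {i}")
        case True
        then have "\<phi> a \<in> Pow {i}" using t unfolding tiso_def by auto
        then have "x (\<phi> a) = x {}" using \<open>x {} = x {i}\<close> unfolding Pow_single by auto
        then show ?thesis using True v by simp
      next
        case False then show ?thesis using v by simp
      qed
    qed
    then show ?thesis using True unfolding Xset_def by simp
  next
    case False
    have "(\<phi> {} = {} \<and> \<phi> {i} = {i}) \<or> (\<phi> {} = {i} \<and> \<phi> {i} = {})"
      using into neq unfolding Pow_single by auto
    then have "x (\<phi> {}) \<noteq> x (\<phi> {i})" using False by auto
    moreover have "v \<in> Pow {i} \<rightarrow>\<^sub>E UNIV" using v by simp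
    ultimately show ?thesis using False v unfolding Xset_def by simp
  qed
qed

lemma Xset_card:
  assumes "CARD('q::finite) = 2"
  shows "card (Xset i (x :: nat set \<Rightarrow> 'q)) \<le> 2" "finite (Xset i x)"
proof -
  have fN: "finite {f \<in> Pow {i} \<rightarrow>\<^sub>E (UNIV :: 'q set). f {} \<noteq> f {i}}"
    by (rule finite_subset[of _ "Pow {i} \<rightarrow>\<^sub>E UNIV"]) (auto intro: finite_PiE)
  have inj: "inj_on (\<lambda>f. f {}) {f \<in> Pow {i} \<rightarrow>\<^sub>E (UNIV :: 'q set). f {} \<noteq> f {i}}"
  proof (rule inj_onI)
    fix f g :: "nat set \<Rightarrow> 'q" assume f: "f \<in> {f \<in> Pow {i} \<rightarrow>\<^sub>E UNIV. f {} \<noteq> f {i}}"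
      and g: "g \<in> {f \<in> Pow {i} \<rightarrow>\<^sub>E UNIV. f {} \<noteq> f {i}}" and e: "f {} = g {}"
    have n1: "f {i} \<noteq> f {}" using f by (simp add: eq_commute)
    have n2: "g {i} \<noteq> f {}" using g e by (simp add: eq_commute)
    have e2: "f {i} = g {i}" by (rule two_elem[OF assms n1 n2])
    have fP: "f \<in> Pow {i} \<rightarrow>\<^sub>E UNIV" using f by blast
    have gP: "g \<in> Pow {i} \<rightarrow>\<^sub>E UNIV" using g by blast
    show "f = g"
    proof
      fix a show "f a = g a"
      proof (cases "a \<in> Pow {i}")
        case True
        then have "a = {} \<or> a = {i}" by blast
        then show ?thesis using e e2 by (elim disjE) simp_all
      next
        case False
        show ?thesis using PiE_arb[OF fP False] PiE_arb[OF gP False] by (rule trans[OF _ sym])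
      qed
    qed
  qed
  have "card {f \<in> Pow {i} \<rightarrow>\<^sub>E (UNIV :: 'q set). f {} \<noteq> f {i}} \<le> card (UNIV :: 'q set)"
    by (rule card_inj_on_le[OF inj]) auto
  then show "card (Xset i x) \<le> 2" using assms unfolding Xset_def by auto
  show "finite (Xset i x)" using fN unfolding Xset_def by auto
qed

lemma orb_base2:
  assumes q: "CARD('q::finite) = 2" and fin: "finite J" and c: "card J = 2"
  shows "card (Orb J (u :: nat set \<Rightarrow> 'q)) \<le> 4"
proof -
  have ne: "J \<noteq> {}" using c by auto
  have "card (J - {Max J}) = 1" using c fin ne by simp
  then obtain i where i: "J - {Max J} = {i}" using card_1_singletonE by blast
  define X0 where "X0 = Xset i (lo J u)"
  define X1 where "X1 = Xset i (hi J u)"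
  have s0: "Orb (J - {Max J}) (lo J u) \<subseteq> X0" unfolding X0_def i by (rule Orb_Xset)
  have s1: "Orb (J - {Max J}) (hi J u) \<subseteq> X1" unfolding X1_def i by (rule Orb_Xset)
  have f0: "finite X0" and c0: "card X0 \<le> 2" unfolding X0_def using Xset_card[OF q] by auto
  have f1: "finite X1" and c1: "card X1 \<le> 2" unfolding X1_def using Xset_card[OF q] by auto
  have "card (Orb J u) \<le> card (X0 \<times> X1 \<union> X1 \<times> X0)" by (rule orb_card_split[OF fin ne s0 s1 f0 f1])
  also have "\<dots> \<le> 4"
  proof (cases "card X0 \<le> 1 \<or> card X1 \<le> 1")
    case True
    have "card (X0 \<times> X1 \<union> X1 \<times> X0) \<le> 2 * card X0 * card X1" by (rule card_sq[OF f0 f1])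
    also have "\<dots> \<le> 4" using True c0 c1
    proof -
      have "card X0 * card X1 \<le> 2"
        using True c0 c1 by (metis le_trans mult_le_mono mult_1 mult.commute nat_mult_1_right order_refl)
      then show ?thesis by simp
    qed
    finally show ?thesis .
  next
    case False
    then have "X0 = X1" unfolding X0_def X1_def Xset_def by (auto split: if_splits)
    then have "card (X0 \<times> X1 \<union> X1 \<times> X0) = card X0 * card X0" by (simp add: card_cartesian_product)
    also have "\<dots> \<le> 2 * 2" using mult_le_mono[OF c0 c0] .
    finally show ?thesis by simp
  qed
  finally show ?thesis .
qed

lemma orb_main:
  assumes q: "CARD('q::finite) \<ge> 2"
  shows "finite J \<Longrightarrow> card J = k + 2 \<Longrightarrow>
     2 * card (Orb J (u :: nat set \<Rightarrow> 'q)) \<le> (CARD('q) ^ 3) ^ (2 ^ k)"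
proof (induction k arbitrary: J u)
  case 0
  show ?case
  proof (cases "CARD('q) = 2")
    case True
    then show ?thesis using orb_base2[OF True 0(1)] 0(2) by simp
  next
    case False
    then have "3 \<le> CARD('q)" using q by simp
    then have "(3::nat) ^ 3 \<le> CARD('q) ^ 3" by (rule power_mono) simp
    moreover have "2 * card (Orb J u) \<le> 2 ^ (2 ^ 2)" using orb_gen[OF 0(1), of u] 0(2) by simp
    ultimately show ?thesis by simp
  qed
next
  case (Suc k)
  then have ne: "J \<noteq> {}" by auto
  have c: "card (J - {Max J}) = k + 2" using Suc ne by simp
  have f: "finite (J - {Max J})" using Suc by simp
  have "2 * card (Orb J u) \<le> (2 * card (Orb (J - {Max J}) (lo J u))) * (2 * card (Orb (J - {Max J}) (hi J u)))"
    using orb_rec[OF Suc(2) ne, of u] by (simp add: algebra_simps)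
  also have "\<dots> \<le> (CARD('q) ^ 3) ^ (2 ^ k) * (CARD('q) ^ 3) ^ (2 ^ k)"
  proof -
    have a: "2 * card (Orb (J - {Max J}) (lo J u)) \<le> (CARD('q) ^ 3) ^ (2 ^ k)" using Suc(1)[OF f c] .
    have b: "2 * card (Orb (J - {Max J}) (hi J u)) \<le> (CARD('q) ^ 3) ^ (2 ^ k)" using Suc(1)[OF f c] .
    show ?thesis using mult_le_mono[OF a b] .
  qed
  also have "\<dots> = (CARD('q) ^ 3) ^ (2 ^ Suc k)" by (simp flip: power_add add: mult_2)
  finally show ?case .
qed


lemma sum_pow_card: "finite X \<Longrightarrow> (\<Sum>D\<in>Pow X. (x::real) ^ card D) = (1 + x) ^ card X"
  using prod_add[of X "\<lambda>_. x" "\<lambda>_. 1"] by (simp add: add.commute)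

lemma finPiE: "finite D \<Longrightarrow> finite (D \<rightarrow>\<^sub>E (UNIV :: 'q::finite set))"
  by (rule finite_PiE) simp_all

lemma powr_ge1: assumes "0 < (l::real)" "l \<le> 1" "t \<le> 0" shows "1 \<le> l powr t"
proof -
  have "l powr (- t) \<le> 1" using assms by (intro powr_le1) auto
  moreover have "l powr t = 1 / l powr (- t)" using assms by (simp add: powr_minus_divide)
  moreover have "0 < l powr (- t)" using assms by simp
  ultimately show ?thesis by simp
qed

lemma ball_card:
  fixes w :: "nat set \<Rightarrow> 'q::finite" and eps l :: real
  assumes X: "finite X" and l: "0 < l" "l \<le> 1"
  shows "real (card {u \<in> X \<rightarrow>\<^sub>E UNIV. real (card {a \<in> X. u a \<noteq> w a}) < eps * card X})
     \<le> l powr (- (eps * card X)) * (1 + CARD('q) * l) ^ card X"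
proof -
  let ?N = "card X"
  let ?B = "{u \<in> X \<rightarrow>\<^sub>E (UNIV :: 'q set). real (card {a \<in> X. u a \<noteq> w a}) < eps * card X}"
  let ?DD = "{D \<in> Pow X. real (card D) \<le> eps * ?N}"
  let ?Sig = "SIGMA D:?DD. (D \<rightarrow>\<^sub>E (UNIV :: 'q set))"
  define F where "F = (\<lambda>(D, g). restrict (\<lambda>a. if a \<in> D then g a else w a) X)"
  have sub: "?B \<subseteq> F ` ?Sig"
  proof
    fix u assume u: "u \<in> ?B"
    define D where "D = {a \<in> X. u a \<noteq> w a}"
    have "D \<in> ?DD" using u unfolding D_def by auto
    moreover have "restrict u D \<in> D \<rightarrow>\<^sub>E UNIV" by simp
    moreover have "F (D, restrict u D) = u"
    proof
      fix a show "F (D, restrict u D) a = u a"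
      proof (cases "a \<in> X")
        case True then show ?thesis unfolding F_def D_def by auto
      next
        case False
        have uP: "u \<in> X \<rightarrow>\<^sub>E UNIV" using u by blast
        show ?thesis using PiE_arb[OF uP False] False unfolding F_def by simp
      qed
    qed
    ultimately show "u \<in> F ` ?Sig" by (metis (no_types, lifting) SigmaI image_eqI)
  qed
  have finDD: "finite ?DD" using X by simp
  have fD0: "\<And>D. D \<in> ?DD \<Longrightarrow> finite D" using X finite_subset by blast
  have finSig: "finite ?Sig"
  proof (rule finite_SigmaI[OF finDD])
    fix D assume "D \<in> ?DD"
    then show "finite (D \<rightarrow>\<^sub>E (UNIV :: 'q set))" using fD0 finPiE by blast
  qed
  have "card ?B \<le> card (F ` ?Sig)" using card_mono[OF finite_imageI[OF finSig] sub] .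
  also have "\<dots> \<le> card ?Sig" using card_image_le[OF finSig] .
  also have "\<dots> = (\<Sum>D\<in>?DD. CARD('q) ^ card D)"
  proof -
    have fD: "\<And>D. D \<in> ?DD \<Longrightarrow> finite D" using X finite_subset by blast
    have "card ?Sig = (\<Sum>D\<in>?DD. card (D \<rightarrow>\<^sub>E (UNIV :: 'q set)))"
      using finDD fD finPiE by (intro card_SigmaI) blast+
    also have "\<dots> = (\<Sum>D\<in>?DD. CARD('q) ^ card D)"
    proof (rule sum.cong[OF refl])
      fix D assume "D \<in> ?DD"
      then have "finite D" using fD by blast
      then show "card (D \<rightarrow>\<^sub>E (UNIV :: 'q set)) = CARD('q) ^ card D" by (rule card_funcsetE)
    qed
    finally show ?thesis .
  qed
  finally have c0: "card ?B \<le> (\<Sum>D\<in>?DD. CARD('q) ^ card D)" .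
  have c1: "real (card ?B) \<le> (\<Sum>D\<in>?DD. real CARD('q) ^ card D)"
    using of_nat_mono[OF c0, where 'a=real] unfolding of_nat_sum of_nat_power .
  have "(\<Sum>D\<in>?DD. real CARD('q) ^ card D) \<le> (\<Sum>D\<in>?DD. real CARD('q) ^ card D * (l ^ card D * l powr (- (eps * ?N))))"
  proof (rule sum_mono)
    fix D assume D: "D \<in> ?DD"
    have "l ^ card D * l powr (- (eps * ?N)) = l powr (real (card D) - eps * ?N)"
      using l by (simp add: powr_diff powr_realpow powr_minus_divide)
    also have "\<dots> \<ge> 1" using D l by (intro powr_ge1) auto
    finally show "real CARD('q) ^ card D \<le> real CARD('q) ^ card D * (l ^ card D * l powr (- (eps * ?N)))"
      by (simp add: mult_le_cancel_left1)
  qed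
  also have "\<dots> \<le> (\<Sum>D\<in>Pow X. real CARD('q) ^ card D * (l ^ card D * l powr (- (eps * ?N))))"
    by (rule sum_mono2) (use X l in auto)
  also have "\<dots> = l powr (- (eps * ?N)) * (\<Sum>D\<in>Pow X. (real CARD('q) * l) ^ card D)"
    by (simp add: sum_distrib_left power_mult_distrib algebra_simps)
  also have "\<dots> = l powr (- (eps * ?N)) * (1 + real CARD('q) * l) ^ ?N"
    using sum_pow_card[OF X] by simp
  finally show ?thesis using c1 by linarith
qed


lemma card_Dm: "card (Dm m) = 2 ^ m" unfolding Dm_def by (simp add: card_Pow)

lemma dH_in: "dH m w1 w2 \<in> (\<lambda>k. real k / 2 ^ m) ` {..2 ^ m}"
proof -
  have "card {g \<in> Dm m. w1 g \<noteq> w2 g} \<le> card (Dm m)"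
    by (rule card_mono) (auto simp: Dm_def)
  then show ?thesis unfolding dH_def card_Dm by auto
qed

lemma dist_set_fin: "finite ((\<lambda>S. dH m w1 (act m S w2)) ` Tm m)"
  by (rule finite_subset[of _ "(\<lambda>k. real k / 2 ^ m) ` {..2 ^ m}"]) (use dH_in in auto)

lemma dist_lt:
  assumes "dist_m m w1 w2 < eps"
  shows "\<exists>S \<in> Tm m. dH m w1 (act m S w2) < eps"
proof -
  have ne: "(\<lambda>S. dH m w1 (act m S w2)) ` Tm m \<noteq> {}" using id_Tm by blast
  show ?thesis using assms unfolding dist_m_def Min_less_iff[OF dist_set_fin ne] by auto
qed

lemma act_id: "w \<in> words m \<Longrightarrow> act m id w = w"
proof
  fix g assume w: "w \<in> words m"
  show "act m id w g = w g"
  proof (cases "g \<in> Dm m")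
    case True
    have "inv_into (Dm m) id g = g" using True by (simp add: inv_into_f_f)
    then show ?thesis using True unfolding act_def by simp
  next
    case False then show ?thesis using words_ext[OF w False] unfolding act_def by simp
  qed
qed

lemma dist_self: "w \<in> words m \<Longrightarrow> dist_m m w w \<le> 0"
proof -
  assume w: "w \<in> words m"
  have "dH m w (act m id w) = 0" using act_id[OF w] unfolding dH_def by simp
  then have "0 \<in> (\<lambda>S. dH m w (act m S w)) ` Tm m" using id_Tm by force
  from Min_le[OF dist_set_fin this] show ?thesis unfolding dist_m_def .
qed

lemma ballW_card:
  fixes w :: "nat set \<Rightarrow> 'q::finite" and eps :: real
  assumes I: "I \<subseteq> {..<m}" and J: "J = {..<m} - I"
    and w: "w \<in> Wper m (dgen (gen ` I))"
    and Om: "\<And>u :: nat set \<Rightarrow> 'q. card (Orb J u) \<le> Omax"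
  shows "card {w' \<in> (Wper m (dgen (gen ` I)) :: (nat set \<Rightarrow> 'q) set). dist_m m w w' < eps}
     \<le> card {u \<in> Pow J \<rightarrow>\<^sub>E (UNIV :: 'q set). real (card {a \<in> Pow J. u a \<noteq> w a}) < eps * card (Pow J)} * Omax"
proof -
  let ?W = "Wper m (dgen (gen ` I)) :: (nat set \<Rightarrow> 'q) set"
  let ?Bl = "{w' \<in> ?W. dist_m m w w' < eps}"
  let ?B = "{u \<in> Pow J \<rightarrow>\<^sub>E (UNIV :: 'q set). real (card {a \<in> Pow J. u a \<noteq> w a}) < eps * card (Pow J)}"
  have finJ: "finite J" using J by simp
  have sub: "(\<lambda>w'. restrict w' (Pow J)) ` ?Bl \<subseteq> (\<Union>u\<in>?B. Orb J u)"
  proof (rule image_subsetI)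
    fix w' assume w': "w' \<in> ?Bl"
    then obtain S where S: "S \<in> Tm m" "dH m w (act m S w') < eps" using dist_lt by blast
    obtain \<phi> where \<phi>: "tiso J \<phi>" "real (card {a \<in> Pow J. w a \<noteq> w' (\<phi> a)}) < eps * 2 ^ card J"
      using reduction[OF I J w _ S] w' by blast
    define u where "u = restrict (\<lambda>a. w' (\<phi> a)) (Pow J)"
    have "{a \<in> Pow J. u a \<noteq> w a} = {a \<in> Pow J. w a \<noteq> w' (\<phi> a)}" unfolding u_def by auto
    then have uB: "u \<in> ?B" using \<phi>(2) finJ unfolding u_def by (simp add: card_Pow)
    let ?\<psi> = "inv_into (Pow J) \<phi>"
    have "restrict w' (Pow J) = restrict (\<lambda>a. u (?\<psi> a)) (Pow J)"
    proof
      fix a show "restrict w' (Pow J) a = restrict (\<lambda>a. u (?\<psi> a)) (Pow J) a"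
        using iso_inv[OF finJ \<phi>(1)] unfolding u_def by simp
    qed
    then have "restrict w' (Pow J) \<in> Orb J u" unfolding Orb_def using iso_inv(1)[OF finJ \<phi>(1)] by blast
    then show "restrict w' (Pow J) \<in> (\<Union>u\<in>?B. Orb J u)" using uB by blast
  qed
  have inj: "inj_on (\<lambda>w'. restrict w' (Pow J)) ?Bl"
    using bij_betw_imp_inj_on[OF Wper_bij[OF I]] J by (auto intro: inj_on_subset)
  have finB: "finite ?B" by (rule finite_subset[of _ "Pow J \<rightarrow>\<^sub>E UNIV"]) (auto intro: finPiE finJ)
  have "card ?Bl = card ((\<lambda>w'. restrict w' (Pow J)) ` ?Bl)" using card_image[OF inj] by simp
  also have "\<dots> \<le> card (\<Union>u\<in>?B. Orb J u)"
    by (rule card_mono[OF _ sub]) (use finB Orb_finite finJ in auto)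
  also have "\<dots> \<le> (\<Sum>u\<in>?B. card (Orb J u))" by (rule card_UN_le[OF finB])
  also have "\<dots> \<le> (\<Sum>u\<in>?B. Omax)" by (rule sum_mono) (rule Om)
  also have "\<dots> = card ?B * Omax" by simp
  finally show ?thesis .
qed


lemma diam_ge:
  assumes "finite A" "x \<in> A" "y \<in> A"
  shows "d x y \<le> diam_d d A"
proof -
  have ne: "A \<noteq> {}" using assms by auto
  have "bdd_above ((\<lambda>p. d (fst p) (snd p)) ` (A \<times> A))" using assms(1) by (intro bdd_above_finite) auto
  then have "d (fst (x, y)) (snd (x, y)) \<le> (SUP p \<in> A \<times> A. d (fst p) (snd p))"
    by (rule cSUP_upper[rotated]) (use assms in auto)
  then show ?thesis unfolding diam_d_def using ne by simp
qed

lemma part_lower: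
  fixes Xw W :: "'a set" and d :: "'a \<Rightarrow> 'a \<Rightarrow> real" and M eps :: real and k :: nat
  assumes fin: "finite Xw" and WX: "W \<subseteq> Xw" and Wne: "W \<noteq> {}"
    and ball: "\<And>w. w \<in> W \<Longrightarrow> real (card {w' \<in> W. d w w' < eps}) \<le> M"
    and P: "(\<Union>i\<le>k. P i) = Xw" "measure_pmf.prob (pmf_of_set W) (P 0) < eps"
      "\<forall>j\<in>{1..k}. diam_d d (P j) < eps"
  shows "real (card W) < eps * card W + k * M"
proof -
  have finW: "finite W" using fin WX finite_subset by blast
  obtain w00 where "w00 \<in> W" using Wne by auto
  then have M0: "0 \<le> M" using ball[of w00] by linarith
  have "W \<subseteq> (\<Union>i\<le>k. P i \<inter> W)" using P(1) WX by auto
  then have "card W \<le> card (\<Union>i\<le>k. P i \<inter> W)" by (rule card_mono[rotated]) (use finW in auto)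
  also have "\<dots> \<le> (\<Sum>i\<le>k. card (P i \<inter> W))" by (rule card_UN_le) (rule finite_atMost)
  also have "{..k} = insert 0 {1..k}" by auto
  then have "(\<Sum>i\<le>k. card (P i \<inter> W)) = card (P 0 \<inter> W) + (\<Sum>i\<in>{1..k}. card (P i \<inter> W))" by simp
  finally have c: "real (card W) \<le> real (card (P 0 \<inter> W)) + (\<Sum>i\<in>{1..k}. real (card (P i \<inter> W)))"
    by (metis of_nat_add of_nat_le_iff of_nat_sum)
  have "measure_pmf.prob (pmf_of_set W) (P 0) = real (card (W \<inter> P 0)) / real (card W)"
    using measure_pmf_of_set[OF Wne finW] .
  then have c0: "real (card (P 0 \<inter> W)) < eps * card W"
    using P(2) finW Wne by (simp add: Int_commute divide_less_eq card_gt_0_iff)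
  have cj: "real (card (P j \<inter> W)) \<le> M" if j: "j \<in> {1..k}" for j
  proof (cases "P j \<inter> W = {}")
    case True then show ?thesis using M0 by simp
  next
    case False
    then obtain w0 where w0: "w0 \<in> P j" "w0 \<in> W" by auto
    have finP: "finite (P j)" using P(1) j fin by (metis (no_types, lifting) UN_upper atLeastAtMost_iff atMost_iff finite_subset)
    have "P j \<inter> W \<subseteq> {w' \<in> W. d w0 w' < eps}"
    proof
      fix w' assume w': "w' \<in> P j \<inter> W"
      have "d w0 w' \<le> diam_d d (P j)" using diam_ge[OF finP w0(1)] w' by auto
      then show "w' \<in> {w' \<in> W. d w0 w' < eps}" using P(3) j w' by fastforce
    qed
    then have "card (P j \<inter> W) \<le> card {w' \<in> W. d w0 w' < eps}" by (rule card_mono[rotated]) (use finW in auto)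
    then show ?thesis using ball[OF w0(2)] by linarith
  qed
  have "(\<Sum>i\<in>{1..k}. real (card (P i \<inter> W))) \<le> (\<Sum>i\<in>{1..k}. M)" by (rule sum_mono) (rule cj)
  also have "\<dots> = k * M" by simp
  finally show ?thesis using c c0 by linarith
qed

lemma part_upper:
  fixes Xw W :: "'a set" and d :: "'a \<Rightarrow> 'a \<Rightarrow> real" and eps :: real
  assumes fin: "finite Xw" and WX: "W \<subseteq> Xw" and Wne: "W \<noteq> {}" and eps: "0 < eps"
    and dd: "\<And>x. x \<in> W \<Longrightarrow> d x x < eps"
  shows "\<exists>P :: nat \<Rightarrow> 'a set. (\<Union>i\<le>card W. P i) = Xw \<and>
      (\<forall>i\<le>card W. \<forall>j\<le>card W. i \<noteq> j \<longrightarrow> P i \<inter> P j = {}) \<and>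
      measure_pmf.prob (pmf_of_set W) (P 0) < eps \<and>
      (\<forall>j\<in>{1..card W}. diam_d d (P j) < eps)"
proof -
  have finW: "finite W" using fin WX finite_subset by blast
  obtain h where h: "bij_betw h {1..card W} W" using ex_bij_betw_nat_finite_1[OF finW] by blast
  define P where "P = (\<lambda>i. if i = 0 then Xw - W else {h i})"
  have "(\<Union>i\<le>card W. P i) = (Xw - W) \<union> (\<Union>i\<in>{1..card W}. {h i})"
  proof -
    have e: "{..card W} = insert 0 {1..card W}" by auto
    have "(\<Union>i\<le>card W. P i) = P 0 \<union> (\<Union>i\<in>{1..card W}. P i)" unfolding e by simp
    also have "(\<Union>i\<in>{1..card W}. P i) = (\<Union>i\<in>{1..card W}. {h i})"
      by (rule SUP_cong) (auto simp: P_def)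
    finally show ?thesis unfolding P_def by simp
  qed
  also have "(\<Union>i\<in>{1..card W}. {h i}) = W" using h unfolding bij_betw_def by auto
  finally have U: "(\<Union>i\<le>card W. P i) = Xw" using WX by auto
  have D: "\<forall>i\<le>card W. \<forall>j\<le>card W. i \<noteq> j \<longrightarrow> P i \<inter> P j = {}"
  proof (intro allI impI)
    fix i j assume ij: "i \<le> card W" "j \<le> card W" "i \<noteq> j"
    have hW: "\<And>x. x \<in> {1..card W} \<Longrightarrow> h x \<in> W" using h unfolding bij_betw_def by auto
    have hi: "inj_on h {1..card W}" using h unfolding bij_betw_def by auto
    show "P i \<inter> P j = {}"
    proof (cases "i = 0")
      case True
      then have "j \<in> {1..card W}" using ij by auto
      then show ?thesis using True hW ij unfolding P_def by auto
    next
      case False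
      note i0 = False
      show ?thesis
      proof (cases "j = 0")
        case True
        then have "i \<in> {1..card W}" using ij i0 by auto
        then show ?thesis using True hW ij unfolding P_def by auto
      next
        case False
        then have "i \<in> {1..card W}" "j \<in> {1..card W}" using ij i0 by auto
        then have "h i \<noteq> h j" using hi ij(3) unfolding inj_on_def by blast
        then show ?thesis using False i0 unfolding P_def by auto
      qed
    qed
  qed
  have "measure_pmf.prob (pmf_of_set W) (P 0) = real (card (W \<inter> (Xw - W))) / real (card W)"
    unfolding P_def using measure_pmf_of_set[OF Wne finW] by simp
  then have M: "measure_pmf.prob (pmf_of_set W) (P 0) < eps" using eps by simp
  have Dm: "\<forall>j\<in>{1..card W}. diam_d d (P j) < eps"
  proof
    fix j assume j: "j \<in> {1..card W}"
    then have "h j \<in> W" using h unfolding bij_betw_def by auto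
    moreover have "diam_d d {h j} = d (h j) (h j)" unfolding diam_d_def by simp
    ultimately show "diam_d d (P j) < eps" using j dd unfolding P_def by auto
  qed
  show ?thesis using U D M Dm by blast
qed


lemma lower_k:
  fixes eps l rho :: real and k :: nat
  assumes q: "CARD('q::finite) \<ge> 2" and I: "I \<subseteq> {..<m}" and n: "n = m - card I" "2 \<le> n"
    and eps: "0 < eps" and l: "0 < l" "l \<le> 1"
    and key: "l powr (- eps) * (1 + CARD('q) * l) \<le> rho"
    and P: "(\<Union>i\<le>k. P i) = (words m :: (nat set \<Rightarrow> 'q) set)"
      "measure_pmf.prob (pmf_of_set (Wper m (dgen (gen ` I)) :: (nat set \<Rightarrow> 'q) set)) (P 0) < eps"
      "\<forall>j\<in>{1..k}. diam_d (dist_m m) (P j) < eps"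
  shows "real (card (Wper m (dgen (gen ` I)) :: (nat set \<Rightarrow> 'q) set))
    < eps * card (Wper m (dgen (gen ` I)) :: (nat set \<Rightarrow> 'q) set) + k * (rho ^ (2 ^ n) * real (CARD('q) ^ 3) ^ (2 ^ (n - 2)))"
proof -
  let ?W = "Wper m (dgen (gen ` I)) :: (nat set \<Rightarrow> 'q) set"
  let ?J = "{..<m} - I"
  have finI: "finite I" using I finite_subset by blast
  have cJ: "card ?J = n" using n I finI by (simp add: card_Diff_subset)
  have finJ: "finite ?J" by simp
  define Omax where "Omax = (CARD('q) ^ 3) ^ (2 ^ (n - 2))"
  have Om: "\<And>u :: nat set \<Rightarrow> 'q. card (Orb ?J u) \<le> Omax"
  proof -
    fix u :: "nat set \<Rightarrow> 'q"
    have "card ?J = (n - 2) + 2" using cJ n by simp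
    from orb_main[OF q finJ this, of u] show "card (Orb ?J u) \<le> Omax" unfolding Omax_def by simp
  qed
  have ballb: "real (card {w' \<in> ?W. dist_m m w w' < eps}) \<le> rho ^ (2 ^ n) * real (CARD('q) ^ 3) ^ (2 ^ (n - 2))"
    if w: "w \<in> ?W" for w
  proof -
    let ?B = "{u \<in> Pow ?J \<rightarrow>\<^sub>E (UNIV :: 'q set). real (card {a \<in> Pow ?J. u a \<noteq> w a}) < eps * card (Pow ?J)}"
    have c1: "card {w' \<in> ?W. dist_m m w w' < eps} \<le> card ?B * Omax"
      by (rule ballW_card[OF I refl w Om])
    have cP: "card (Pow ?J) = 2 ^ n" using cJ finJ by (simp add: card_Pow)
    have "real (card ?B) \<le> l powr (- (eps * card (Pow ?J))) * (1 + CARD('q) * l) ^ card (Pow ?J)"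
      by (rule ball_card[OF _ l]) simp
    also have "\<dots> = (l powr (- eps) * (1 + CARD('q) * l)) ^ (2 ^ n)"
    proof -
      have "l powr (- (eps * card (Pow ?J))) = (l powr (- eps)) powr (real (2 ^ n))"
        using cP by (simp add: powr_powr)
      also have "\<dots> = (l powr (- eps)) ^ (2 ^ n)"
        using powr_realpow[of "l powr (- eps)" "2 ^ n"] l by simp
      finally show ?thesis using cP by (simp add: power_mult_distrib)
    qed
    also have "\<dots> \<le> rho ^ (2 ^ n)"
    proof (rule power_mono[OF key])
      show "0 \<le> l powr (- eps) * (1 + real CARD('q) * l)" using l by (intro mult_nonneg_nonneg) auto
    qed
    finally have c2: "real (card ?B) \<le> rho ^ (2 ^ n)" .
    have "real (card {w' \<in> ?W. dist_m m w w' < eps}) \<le> real (card ?B) * real Omax"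
      using of_nat_mono[OF c1, where 'a=real] by simp
    also have "\<dots> \<le> rho ^ (2 ^ n) * real Omax" using c2 by (intro mult_right_mono) auto
    finally show ?thesis unfolding Omax_def by simp
  qed
  show ?thesis
    by (rule part_lower[OF finite_words Wper_words Wper_nonempty ballb P])
qed


theorem lemma17:
  assumes "CARD('q::finite) \<ge> 2"
  shows "\<exists>eps0 > 0. \<forall>eps. 0 < eps \<and> eps < eps0 \<longrightarrow>
     (\<exists>c C N. 0 < c \<and> c \<le> C \<and>
        (\<forall>m r I. r \<le> m \<and> I \<subseteq> {..<m} \<and> card I = r \<and> N \<le> m - r \<longrightarrow>
           (let H = H_eps (words m :: (nat set \<Rightarrow> 'q) set)
                      (pmf_of_set (Wper m (dgen (gen ` I)))) (dist_m m) eps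
            in c * 2 ^ (m - r) \<le> H \<and> H \<le> C * 2 ^ (m - r))))"
proof -
  define q where "q = real CARD('q)"
  have q2: "2 \<le> q" using assms unfolding q_def by simp
  define rho where "rho = q powr (1/8)"
  have rho1: "1 < rho" unfolding rho_def using q2 by (intro gr_one_powr) auto
  have rhoq: "rho \<le> q"
  proof -
    have "q powr (1/8) \<le> q powr 1" using q2 by (intro powr_mono) auto
    then show ?thesis unfolding rho_def using q2 by simp
  qed
  define l where "l = (rho - 1) / (2 * q)"
  have l0: "0 < l" unfolding l_def using rho1 q2 by simp
  have l1: "l < 1" unfolding l_def using rhoq q2 by (simp add: divide_less_eq)
  define beta where "beta = 2 * rho / (1 + rho)"
  have beta1: "1 < beta" unfolding beta_def using rho1 by (simp add: less_divide_eq)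
  have lnb: "0 < ln beta" using beta1 by simp
  have lnl: "0 < - ln l" using l0 l1 by simp
  define eps0 where "eps0 = min (1/2) (ln beta / (- ln l))"
  have "0 < ln beta / (- ln l)" using lnb lnl by (rule divide_pos_pos)
  then have eps0: "0 < eps0" unfolding eps0_def by simp
  show ?thesis
  proof (rule exI[of _ eps0], intro conjI allI impI eps0)
    fix eps :: real assume e: "0 < eps \<and> eps < eps0"
    have e0: "0 < eps" and eh: "eps < 1/2" using e unfolding eps0_def by auto
    have key: "l powr (- eps) * (1 + CARD('q) * l) \<le> rho"
    proof -
      have "eps < ln beta / (- ln l)" using e unfolding eps0_def by linarith
      then have "eps * (- ln l) < ln beta" using pos_less_divide_eq[OF lnl] by blast
      then have "exp (eps * (- ln l)) < exp (ln beta)" by simp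
      moreover have "l powr (- eps) = exp (eps * (- ln l))" using l0 unfolding powr_def by simp
      moreover have "exp (ln beta) = beta" using beta1 by simp
      ultimately have "l powr (- eps) < beta" by simp
      moreover have "1 + CARD('q) * l = (1 + rho) / 2" unfolding l_def q_def[symmetric] using q2 by (simp add: field_simps)
      moreover have "beta * ((1 + rho) / 2) = rho" unfolding beta_def using rho1 by (simp add: field_simps)
      moreover have "0 < (1 + rho) / 2" using rho1 by simp
      ultimately show ?thesis by (metis less_eq_real_def mult_strict_right_mono)
    qed
    show "\<exists>c C N. 0 < c \<and> c \<le> C \<and>
        (\<forall>m r I. r \<le> m \<and> I \<subseteq> {..<m} \<and> card I = r \<and> N \<le> m - r \<longrightarrow>
           (let H = H_eps (words m :: (nat set \<Rightarrow> 'q) set)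
                      (pmf_of_set (Wper m (dgen (gen ` I)))) (dist_m m) eps
            in c * 2 ^ (m - r) \<le> H \<and> H \<le> C * 2 ^ (m - r)))"
    proof -
      have lq: "1 \<le> log 2 q" using q2 by simp
      have main: "\<forall>m r I. r \<le> m \<and> I \<subseteq> {..<m} \<and> card I = r \<and> 4 \<le> m - r \<longrightarrow>
           (let H = H_eps (words m :: (nat set \<Rightarrow> 'q) set)
                      (pmf_of_set (Wper m (dgen (gen ` I)))) (dist_m m) eps
            in 1/16 * 2 ^ (m - r) \<le> H \<and> H \<le> log 2 q * 2 ^ (m - r))"
      proof (intro allI impI)
      fix m r :: nat and I :: "nat set"
      assume a: "r \<le> m \<and> I \<subseteq> {..<m} \<and> card I = r \<and> 4 \<le> m - r"
      then have I: "I \<subseteq> {..<m}" and rI: "card I = r" and n4: "4 \<le> m - r" by auto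
      define n where "n = m - r"
      let ?W = "Wper m (dgen (gen ` I)) :: (nat set \<Rightarrow> 'q) set"
      let ?Pr = "\<lambda>k. \<exists>P :: nat \<Rightarrow> (nat set \<Rightarrow> 'q) set.
        (\<Union>i\<le>k. P i) = words m \<and>
        (\<forall>i\<le>k. \<forall>j\<le>k. i \<noteq> j \<longrightarrow> P i \<inter> P j = {}) \<and>
        measure_pmf.prob (pmf_of_set ?W) (P 0) < eps \<and>
        (\<forall>j\<in>{1..k}. diam_d (dist_m m) (P j) < eps)"
      have ex: "?Pr (card ?W)"
        by (rule part_upper[OF finite_words Wper_words Wper_nonempty e0])
           (use dist_self Wper_words e0 in fastforce)
      define K where "K = (LEAST k. ?Pr k)"
      have PK: "?Pr K" unfolding K_def by (rule LeastI_ex) (use ex in blast)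
      have Kle: "K \<le> card ?W" unfolding K_def by (rule Least_le) (rule ex)
      have H: "H_eps (words m :: (nat set \<Rightarrow> 'q) set) (pmf_of_set ?W) (dist_m m) eps = log 2 (real K)"
        unfolding H_eps_def K_def ..
      define Nn :: nat where "Nn = 2 ^ n"
      have cW: "real (card ?W) = q ^ Nn" using card_Wper[OF I] unfolding q_def Nn_def n_def rI by simp
      define M where "M = rho ^ Nn * real (CARD('q) ^ 3) ^ (2 ^ (n - 2))"
      obtain P where P: "(\<Union>i\<le>K. P i) = words m"
        "measure_pmf.prob (pmf_of_set ?W) (P 0) < eps" "\<forall>j\<in>{1..K}. diam_d (dist_m m) (P j) < eps"
        using PK by blast
      have lk: "real (card ?W) < eps * card ?W + K * M"
        unfolding M_def Nn_def
        by (rule lower_k[OF assms I _ _ e0 l0 _ key P]) (use n4 l1 rI n_def in auto)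
      have qpos: "0 < q" using q2 by simp
      have A: "q ^ Nn = q powr real Nn" using qpos by (simp add: powr_realpow)
      have R: "rho ^ Nn = q powr (real Nn / 8)" unfolding rho_def using qpos
        by (simp add: powr_power)
      have n2: "Nn = 4 * 2 ^ (n - 2)"
      proof -
        have "n = (n - 2) + 2" using n4 n_def by simp
        then have "(2::nat) ^ n = 2 ^ (n - 2) * 2 ^ 2" by (metis power_add)
        then show ?thesis unfolding Nn_def by simp
      qed
      have Q: "real (CARD('q) ^ 3) ^ (2 ^ (n - 2)) = q powr (3 * real Nn / 4)"
      proof -
        have "real (CARD('q) ^ 3) ^ (2 ^ (n - 2)) = q ^ (3 * 2 ^ (n - 2))"
          unfolding q_def by (simp add: power_mult)
        also have "\<dots> = q powr real (3 * 2 ^ (n - 2))" using powr_realpow[OF qpos, of "3 * 2 ^ (n - 2)"] by argo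
        also have "real (3 * 2 ^ (n - 2)) = 3 * real Nn / 4" using n2 by simp
        finally show ?thesis .
      qed
      have Mq: "M = q powr (7 * real Nn / 8)"
        unfolding M_def R Q by (simp add: powr_add[symmetric])
      have Mpos: "0 < M" unfolding Mq using qpos by simp
      have "q powr real Nn / 2 < K * M" using lk cW A eh
      proof -
        have "(1 - eps) * real (card ?W) < K * M" using lk by (simp add: algebra_simps)
        moreover have "1/2 * real (card ?W) \<le> (1 - eps) * real (card ?W)" using eh by (intro mult_right_mono) auto
        ultimately show ?thesis using cW A by simp
      qed
      then have "q powr real Nn / 2 / M < K" using Mpos by (simp add: divide_less_eq algebra_simps)
      moreover have "q powr real Nn / 2 / M = q powr (real Nn / 8) / 2"
        unfolding Mq using qpos by (simp add: powr_diff[symmetric] field_simps)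
      ultimately have Kb: "q powr (real Nn / 8) / 2 < K" by simp
      have "0 < q powr (real Nn / 8) / 2" using qpos by simp
      then have Kpos: "0 < real K" using Kb by linarith
      have "log 2 (q powr (real Nn / 8) / 2) \<le> log 2 (real K)"
        using Kb qpos by (intro log_mono) auto
      moreover have "log 2 (q powr (real Nn / 8) / 2) = real Nn / 8 * log 2 q - 1"
        using qpos by (simp add: log_divide log_powr)
      moreover have "16 \<le> real Nn"
      proof -
        have "2 ^ 4 \<le> Nn" unfolding Nn_def using n4 n_def by (intro power_increasing) auto
        then show ?thesis by simp
      qed
      moreover have "real Nn / 8 * 1 \<le> real Nn / 8 * log 2 q" using lq by (intro mult_left_mono) auto
      ultimately have low: "1/16 * real Nn \<le> log 2 (real K)" by linarith
      have "log 2 (real K) \<le> log 2 (real (card ?W))"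
        using Kpos Kle by (intro log_mono) auto
      also have "\<dots> = real Nn * log 2 q" unfolding cW using qpos by (simp add: log_nat_power)
      finally have up: "log 2 (real K) \<le> log 2 q * real Nn" by (simp add: mult.commute)
      have NnE: "real Nn = 2 ^ (m - r)" unfolding Nn_def n_def by simp
      show "let H = H_eps (words m :: (nat set \<Rightarrow> 'q) set) (pmf_of_set ?W) (dist_m m) eps
            in 1/16 * 2 ^ (m - r) \<le> H \<and> H \<le> log 2 q * 2 ^ (m - r)"
        unfolding Let_def H using low up NnE by simp
    qed
    have c0: "(0::real) < 1/16" by simp
    have c1: "1/16 \<le> log 2 q" using lq by simp
    show ?thesis using c0 c1 main by blast
    qed
  qed
qed


end
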